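(* Let $N\ge1$. (a) For a proper layered colored planar tree $T$, the breadth-first order $\ll$ coincides with the order $\prec_r$ on the set of non-degenerate vertices of $T$ if and only if $T$ is simple and order reduced (i.e. $T\in\mathbf{OST}$). (b) For every $j\in\langle N\rangle$ and word $u$, the contraction map $\rho$ is a bijection of $\mathbf{OST}_u^j$ onto $\mathbf{RT}_u^j$. (c) If $T\in\mathbf{RT}_u^j$ and $T'$ is the unique tree in $\mathbf{OST}_u^j$ with $\rho(T')=T$, then $\Omega(T')=\Lambda_{\uparrow r}(T)$ and $\ell(T')=\mathbf v(T)$.
   Context: Let $\langle N\rangle=\{1,\dots,N\}$. $\mathcal H^N$ denotes the free unital associative complex algebra on symbols $Y_u^i$ ($i\in\langle N\rangle$, $u$ a word over $\langle N\rangle$ of length $\ge2$), with the convention $Y_j^i=\delta_{ij}1$ for letters $i,j$. Trees: a colored planar tree is a finite rooted tree with linearly ordered children at each vertex and colors $c(x)\in\langle N\rangle$ on vertices such that if $x$ has exactly one child $y$ then $c(y)=c(x)$; trees are up to isomorphism. Root at level $0$, children of level-$k$ vertices at level $k+1$; vertices of a level are ordered left to right (by parents, then among siblings). Leaf: no children; unary: exactly one child; non-degenerate: at least two children. Layered: all leaves on the same level $h$, and $\ell(T)=h$ is the number of layers. Proper: every level $k<h$ contains a non-degenerate vertex. Simple: each level contains at most one non-degenerate vertex. A layered tree is order contractible at a non-degenerate non-root vertex $x$ on level $k$ if its parent $x'$ is unary, no non-degenerate vertex lies to the right of $x$ on level $k$, and no non-degenerate vertex lies to the left of $x'$ on level $k-1$;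 it is order reduced if it is order contractible at no vertex. $\mathbf{OST}_u^j$: proper simple order reduced layered colored planar trees with root colored $j$ and leaves colored (left to right) by $u$. A tree is reduced if it has no unary vertices; $\mathbf{RT}_u^j$: reduced colored planar trees with root colored $j$ and leaves colored (left to right) by $u$. The contraction $\rho(T)$ of a tree $T$ is obtained by contracting every edge from a unary vertex to its child (identifying the two, which have the same color); the non-degenerate vertices of $T$ are thereby identified with the non-leaf vertices of $\rho(T)$. Orders: $x\ll y$ iff $x$ is on a deeper level than $y$, or on the same level and to the left of $y$. $x\prec_r y$ iff $y$ is a proper ancestor of $x$, or, with $z$ the nearest common ancestor of $x,y$, the child of $z$ towards $x$ is to the right of the child of $z$ towards $y$. For a non-leaf $x$ with children $y_1<\dots<y_k$, $Y(x)=Y^{c(x)}_{c(y_1)\cdots c(y_k)}$. $\Omega(T')=\prod Y(x)$ over the non-degenerate vertices of $T'$ in increasing $\ll$ order; $\Lambda_{\uparrow r}(T)=\prod Y(x)$ over the non-leaf vertices of $T$ in increasing $\prec_r$ order; $\mathbf v(T)$ is the number of non-leaf vertices of $T$. *)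

theory Defs
  imports Main Complex_Main
begin

text \<open>A colored planar tree: each node carries a color and an ordered list of children.
  Datatype equality is exactly isomorphism of planar rooted trees.\<close>
datatype ctree = Node nat "ctree list"

fun col :: "ctree \<Rightarrow> nat" where "col (Node c ts) = c"
fun kids :: "ctree \<Rightarrow> ctree list" where "kids (Node c ts) = ts"

text \<open>Vertices are addressed by paths of child indices from the root.\<close>
fun valid :: "ctree \<Rightarrow> nat list \<Rightarrow> bool" where
  "valid t [] = True"
| "valid (Node c ts) (i # p) = (i < length ts \<and> valid (ts ! i) p)"

fun sub :: "ctree \<Rightarrow> nat list \<Rightarrow> ctree" where
  "sub t [] = t"
| "sub (Node c ts) (i # p) = sub (ts ! i) p"

definition verts :: "ctree \<Rightarrow> nat list set" where
  "verts t = {p. valid t p}"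

definition vcol :: "ctree \<Rightarrow> nat list \<Rightarrow> nat" where
  "vcol t p = col (sub t p)"

definition nkids :: "ctree \<Rightarrow> nat list \<Rightarrow> nat" where
  "nkids t p = length (kids (sub t p))"

definition is_leaf :: "ctree \<Rightarrow> nat list \<Rightarrow> bool" where
  "is_leaf t p \<longleftrightarrow> nkids t p = 0"

definition unary :: "ctree \<Rightarrow> nat list \<Rightarrow> bool" where
  "unary t p \<longleftrightarrow> nkids t p = 1"

definition nondeg :: "ctree \<Rightarrow> nat list \<Rightarrow> bool" where
  "nondeg t p \<longleftrightarrow> nkids t p \<ge> 2"

definition colored :: "nat \<Rightarrow> ctree \<Rightarrow> bool" where
  "colored N t \<longleftrightarrow> (\<forall>p\<in>verts t. vcol t p \<in> {1..N}) \<and>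
     (\<forall>p\<in>verts t. unary t p \<longrightarrow> vcol t (p @ [0]) = vcol t p)"

fun leafword :: "ctree \<Rightarrow> nat list" where
  "leafword (Node c ts) = (if ts = [] then [c] else concat (map leafword ts))"

fun height :: "ctree \<Rightarrow> nat" where
  "height (Node c ts) = (if ts = [] then 0 else Suc (fold max (map height ts) 0))"

text \<open>Level of a vertex = length of its path. \<open>left_of x y\<close>: x and y on the same level
  and x strictly to the left of y (ordered by parents, then among siblings).\<close>
definition left_of :: "nat list \<Rightarrow> nat list \<Rightarrow> bool" where
  "left_of x y \<longleftrightarrow> length x = length y \<and>
     (\<exists>a i j b c. x = a @ i # b \<and> y = a @ j # c \<and> i < j)"

definition layered :: "ctree \<Rightarrow> bool" where
  "layered t \<longleftrightarrow> (\<forall>p\<in>verts t. is_leaf t p \<longrightarrow> length p = height t)"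

text \<open>Number of layers \<open>\<ell>(T)\<close> (level of the leaves of a layered tree).\<close>
definition nlayers :: "ctree \<Rightarrow> nat" where
  "nlayers t = height t"

definition proper :: "ctree \<Rightarrow> bool" where
  "proper t \<longleftrightarrow> (\<forall>k < nlayers t. \<exists>p\<in>verts t. length p = k \<and> nondeg t p)"

definition simple :: "ctree \<Rightarrow> bool" where
  "simple t \<longleftrightarrow> (\<forall>p\<in>verts t. \<forall>q\<in>verts t.
      nondeg t p \<and> nondeg t q \<and> length p = length q \<longrightarrow> p = q)"

definition order_contractible_at :: "ctree \<Rightarrow> nat list \<Rightarrow> bool" where
  "order_contractible_at t x \<longleftrightarrow> x \<in> verts t \<and> x \<noteq> [] \<and> nondeg t x \<and>
     unary t (butlast x) \<and>
     \<not> (\<exists>y\<in>verts t. nondeg t y \<and> left_of x y) \<and>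
     \<not> (\<exists>y\<in>verts t. nondeg t y \<and> left_of y (butlast x))"

definition order_reduced :: "ctree \<Rightarrow> bool" where
  "order_reduced t \<longleftrightarrow> (\<forall>x. \<not> order_contractible_at t x)"

definition reduced :: "ctree \<Rightarrow> bool" where
  "reduced t \<longleftrightarrow> (\<forall>p\<in>verts t. \<not> unary t p)"

definition OST :: "nat \<Rightarrow> nat list \<Rightarrow> nat \<Rightarrow> ctree set" where
  "OST N u j = {t. colored N t \<and> layered t \<and> proper t \<and> simple t \<and> order_reduced t \<and>
                   col t = j \<and> leafword t = u}"

definition RT :: "nat \<Rightarrow> nat list \<Rightarrow> nat \<Rightarrow> ctree set" where
  "RT N u j = {t. colored N t \<and> reduced t \<and> col t = j \<and> leafword t = u}"

fun contract :: "ctree \<Rightarrow> ctree" where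
  "contract (Node c [t]) = contract t"
| "contract (Node c ts) = Node c (map contract ts)"

definition bfs_less :: "nat list \<Rightarrow> nat list \<Rightarrow> bool" where
  "bfs_less x y \<longleftrightarrow> length x > length y \<or> left_of x y"

definition r_less :: "nat list \<Rightarrow> nat list \<Rightarrow> bool" where
  "r_less x y \<longleftrightarrow> (\<exists>z. z \<noteq> [] \<and> x = y @ z) \<or>
     (\<exists>a i j b c. x = a @ i # b \<and> y = a @ j # c \<and> j < i)"

text \<open>Generator \<open>Y\<^sup>i\<^sub>u\<close> is represented by the pair \<open>(i,u)\<close>; monomials are lists of
  generators (free monoid), and elements of the free unital associative complex algebra
  are finitely supported complex functions on monomials, with convolution product.\<close>
type_synonym hmono = "(nat \<times> nat list) list"
type_synonym halg = "hmono \<Rightarrow> complex"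

definition hone :: halg where "hone w = (if w = [] then 1 else 0)"

definition hmult :: "halg \<Rightarrow> halg \<Rightarrow> halg" where
  "hmult f g w = (\<Sum>k\<le>length w. f (take k w) * g (drop k w))"

definition hprod :: "halg list \<Rightarrow> halg" where
  "hprod xs = foldr hmult xs hone"

text \<open>\<open>Y\<^sup>i\<^sub>u\<close> with the convention \<open>Y\<^sup>i\<^sub>j = \<delta>\<^sub>i\<^sub>j 1\<close> for letters.\<close>
definition Ygen :: "nat \<Rightarrow> nat list \<Rightarrow> halg" where
  "Ygen i u = (if length u \<ge> 2 then (\<lambda>w. if w = [(i, u)] then 1 else 0)
               else if u = [i] then hone else (\<lambda>w. 0))"

definition Yv :: "ctree \<Rightarrow> nat list \<Rightarrow> halg" where
  "Yv t x = Ygen (vcol t x) (map col (kids (sub t x)))"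

definition Omega :: "ctree \<Rightarrow> halg" where
  "Omega t = hprod (map (Yv t)
     (THE xs. sorted_wrt bfs_less xs \<and> set xs = {x\<in>verts t. nondeg t x}))"

definition Lambda_r :: "ctree \<Rightarrow> halg" where
  "Lambda_r t = hprod (map (Yv t)
     (THE xs. sorted_wrt r_less xs \<and> set xs = {x\<in>verts t. \<not> is_leaf t x}))"

definition nv :: "ctree \<Rightarrow> nat" where
  "nv t = card {x\<in>verts t. \<not> is_leaf t x}"

end

theory Submission
  imports Defs
begin

abbreviation rl :: "(nat list \<times> nat list) set" where "rl \<equiv> lexord {(a,b). a < b}"

lemma r_less_lex: "r_less x y \<longleftrightarrow> (y, x) \<in> rl"
  unfolding r_less_def lexord_def
  apply (auto simp: neq_Nil_conv)
  apply blast+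
  done

lemma left_of_lex: "left_of x y \<longleftrightarrow> length x = length y \<and> (x, y) \<in> rl"
  unfolding left_of_def lexord_def by (auto; blast)

lemma rl_trans: "(x,y) \<in> rl \<Longrightarrow> (y,z) \<in> rl \<Longrightarrow> (x,z) \<in> rl"
  by (erule lexord_trans) (auto simp: trans_def)

lemma rl_irrefl: "(x,x) \<notin> rl"
  by (rule lexord_irreflexive) auto

lemma rl_asym: "(x,y) \<in> rl \<Longrightarrow> (y,x) \<notin> rl"
  using rl_trans rl_irrefl by blast

lemma rl_total: "x \<noteq> y \<Longrightarrow> (x,y) \<in> rl \<or> (y,x) \<in> rl"
  using lexord_linear[of "{(a,b). a < (b::nat)}" x y] by fastforce

lemma nkids_Nil[simp]: "nkids (Node c ts) [] = length ts"
  by (simp add: nkids_def)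
lemma nkids_Cons[simp]: "nkids (Node c ts) (i#p) = nkids (ts!i) p"
  by (simp add: nkids_def)
lemma vcol_Nil[simp]: "vcol (Node c ts) [] = c"
  by (simp add: vcol_def)
lemma vcol_Cons[simp]: "vcol (Node c ts) (i#p) = vcol (ts!i) p"
  by (simp add: vcol_def)
lemma unary_simps[simp]: "unary (Node c ts) [] = (length ts = 1)" "unary (Node c ts) (i#p) = unary (ts!i) p"
  by (auto simp add: unary_def)
lemma nondeg_simps[simp]: "nondeg (Node c ts) [] = (2 \<le> length ts)" "nondeg (Node c ts) (i#p) = nondeg (ts!i) p"
  by (auto simp add: nondeg_def)
lemma is_leaf_simps[simp]: "is_leaf (Node c ts) [] = (ts = [])" "is_leaf (Node c ts) (i#p) = is_leaf (ts!i) p"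
  by (auto simp add: is_leaf_def)

lemma valid_Nil[simp]: "valid t []" by (cases t) auto

lemma verts_Nil[simp]: "[] \<in> verts t" by (simp add: verts_def)
lemma verts_Cons[simp]: "(i#p) \<in> verts (Node c ts) \<longleftrightarrow> i < length ts \<and> p \<in> verts (ts!i)"
  by (simp add: verts_def)

lemma all_verts_Node: "(\<forall>p\<in>verts (Node c ts). P p) \<longleftrightarrow> P [] \<and> (\<forall>i<length ts. \<forall>p\<in>verts (ts!i). P (i#p))"
  apply (auto)
  apply (case_tac p) apply auto
  done

lemma ex_verts_Node: "(\<exists>p\<in>verts (Node c ts). P p) \<longleftrightarrow> P [] \<or> (\<exists>i<length ts. \<exists>p\<in>verts (ts!i). P (i#p))"
  apply (auto)
  apply (case_tac p) apply auto
  done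

lemma valid_append: "valid t (p@q) \<longleftrightarrow> valid t p \<and> valid (sub t p) q"
  by (induction p arbitrary: t) (auto elim: valid.elims)

lemma sub_append: "sub t (p@q) = sub (sub t p) q"
proof (induction p arbitrary: t)
  case Nil then show ?case by simp
next
  case (Cons i p) then show ?case by (cases t) auto
qed

lemma finite_verts: "finite (verts t)"
proof (induction t)
  case (Node c ts)
  have "verts (Node c ts) = insert [] (\<Union>i<length ts. (#) i ` verts (ts!i))"
  proof (rule set_eqI)
    fix x show "x \<in> verts (Node c ts) \<longleftrightarrow> x \<in> insert [] (\<Union>i<length ts. (#) i ` verts (ts!i))"
      by (cases x) auto
  qed
  then show ?case using Node by auto
qed

lemma colored_Node: "colored N (Node c ts) \<longleftrightarrow> c \<in> {1..N} \<and> (length ts = 1 \<longrightarrow> col (ts!0) = c)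
   \<and> (\<forall>i<length ts. colored N (ts!i))"
  unfolding colored_def all_verts_Node
  by (auto simp: vcol_def)

lemma reduced_Node: "reduced (Node c ts) \<longleftrightarrow> length ts \<noteq> 1 \<and> (\<forall>i<length ts. reduced (ts!i))"
  unfolding reduced_def all_verts_Node by auto

lemma colored_sub: "colored N t \<Longrightarrow> valid t p \<Longrightarrow> colored N (sub t p)"
proof (induction p arbitrary: t)
  case Nil then show ?case by simp
next
  case (Cons i p) then show ?case by (cases t) (auto simp: colored_Node)
qed

definition lay :: "nat \<Rightarrow> ctree \<Rightarrow> bool" where
  "lay n t \<longleftrightarrow> (\<forall>p\<in>verts t. is_leaf t p \<longrightarrow> length p = n)"

lemma ex_leaf: "\<exists>p\<in>verts t. is_leaf t p"
proof (induction t)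
  case (Node c ts)
  show ?case
  proof (cases ts)
    case Nil then show ?thesis by (intro bexI[of _ "[]"]) auto
  next
    case (Cons t ts')
    then obtain q where "q \<in> verts t" "is_leaf t q" using Node by auto
    then show ?thesis using Cons by (intro bexI[of _ "0#q"]) auto
  qed
qed

lemma lay_Node: "lay n (Node c ts) \<longleftrightarrow> (ts = [] \<and> n = 0) \<or> (ts \<noteq> [] \<and> 0 < n \<and> (\<forall>i<length ts. lay (n-1) (ts!i)))"
proof
  assume L: "lay n (Node c ts)"
  show "(ts = [] \<and> n = 0) \<or> (ts \<noteq> [] \<and> 0 < n \<and> (\<forall>i<length ts. lay (n-1) (ts!i)))"
  proof (cases ts)
    case Nil
    have "is_leaf (Node c []) []" by simp
    then show ?thesis using L Nil unfolding lay_def by (metis verts_Nil list.size(3))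
  next
    case (Cons t ts')
    obtain q where "q \<in> verts t" "is_leaf t q" using ex_leaf by blast
    then have "Suc (length q) = n" using L Cons unfolding lay_def all_verts_Node by force
    then show ?thesis using L Cons unfolding lay_def all_verts_Node by force
  qed
next
  assume "(ts = [] \<and> n = 0) \<or> (ts \<noteq> [] \<and> 0 < n \<and> (\<forall>i<length ts. lay (n-1) (ts!i)))"
  then show "lay n (Node c ts)" unfolding lay_def all_verts_Node by auto
qed

lemma fold_max_const: "(\<forall>x\<in>set xs. x = (m::nat)) \<Longrightarrow> xs \<noteq> [] \<Longrightarrow> fold max xs a = max a m"
proof (induction xs arbitrary: a)
  case Nil then show ?case by simp
next
  case (Cons x xs)
  show ?case
  proof (cases "xs = []")
    case True then show ?thesis using Cons.prems by (simp add: max.commute[of m a])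
  next
    case False
    then have "fold max xs (max x a) = max (max x a) m" using Cons by simp
    then show ?thesis using Cons.prems by (simp add: max.commute max.left_commute)
  qed
qed

lemma lay_height: "lay n t \<Longrightarrow> height t = n"
proof (induction t arbitrary: n)
  case (Node c ts)
  show ?case
  proof (cases "ts = []")
    case True then show ?thesis using Node.prems by (simp add: lay_Node)
  next
    case False
    then have n: "0 < n" "\<forall>i<length ts. lay (n-1) (ts!i)" using Node.prems by (auto simp: lay_Node)
    have "\<forall>x\<in>set (map height ts). x = n - 1"
    proof
      fix x assume "x \<in> set (map height ts)"
      then obtain i where "i < length ts" "x = height (ts!i)" by (auto simp: in_set_conv_nth)
      then show "x = n - 1" using Node.IH[of "ts!i" "n-1"] n by auto
    qed
    then have "fold max (map height ts) 0 = n - 1" using False fold_max_const[of "map height ts" "n-1" 0] by simp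
    then show ?thesis using False n by simp
  qed
qed

lemma layered_lay: "layered t \<longleftrightarrow> lay (height t) t"
  by (simp add: layered_def lay_def)

lemma lay_layered: "lay n t \<Longrightarrow> layered t \<and> height t = n"
  using lay_height layered_lay by metis

lemma lay_sub: "lay n t \<Longrightarrow> valid t p \<Longrightarrow> length p \<le> n \<and> lay (n - length p) (sub t p)"
proof (induction p arbitrary: t n)
  case Nil then show ?case by simp
next
  case (Cons i p)
  obtain c ts where t: "t = Node c ts" by (cases t)
  then have "i < length ts" "valid (ts!i) p" using Cons.prems by auto
  moreover have "0 < n" "lay (n-1) (ts!i)" using Cons.prems t \<open>i < length ts\<close> by (auto simp: lay_Node)
  ultimately show ?case using Cons.IH[of n "ts!i"] Cons.IH[of "n-1" "ts!i"] t by auto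
qed

lemma lay_nonleaf: "lay n t \<Longrightarrow> valid t p \<Longrightarrow> \<not> is_leaf t p \<Longrightarrow> length p < n"
proof -
  assume a: "lay n t" "valid t p" "\<not> is_leaf t p"
  then have "length p \<le> n" "lay (n - length p) (sub t p)" using lay_sub by auto
  moreover obtain c ts where "sub t p = Node c ts" by (cases "sub t p")
  moreover then have "ts \<noteq> []" using a(3) by (simp add: is_leaf_def nkids_def)
  ultimately show ?thesis by (auto simp: lay_Node)
qed

lemma contract_Node: "length ts \<noteq> 1 \<Longrightarrow> contract (Node c ts) = Node c (map contract ts)"
  by (cases ts rule: remdups_adj.cases) auto

lemma colored_Node': "colored N (Node c ts) \<longleftrightarrow> c \<in> {1..N} \<and> (length ts = 1 \<longrightarrow> col (hd ts) = c)
   \<and> (\<forall>x\<in>set ts. colored N x)"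
  unfolding colored_Node all_set_conv_all_nth by (cases ts) auto

lemma reduced_Node': "reduced (Node c ts) \<longleftrightarrow> length ts \<noteq> 1 \<and> (\<forall>x\<in>set ts. reduced x)"
  unfolding reduced_Node all_set_conv_all_nth by auto

lemma colored_contract: "colored N t \<Longrightarrow> colored N (contract t) \<and> col (contract t) = col t"
proof (induction t rule: contract.induct)
  case (1 c t) then show ?case by (auto simp: colored_Node')
next
  case ("2_1" c) then show ?case by (auto simp: colored_Node')
next
  case ("2_2" c v vb vc)
  then show ?case by (auto simp: colored_Node')
qed

lemma reduced_contract: "reduced (contract t)"
proof (induction t rule: contract.induct)
  case (1 c t) then show ?case by auto
next
  case ("2_1" c) then show ?case by (auto simp: reduced_Node')
next
  case ("2_2" c v vb vc)
  then show ?case by (auto simp: reduced_Node')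
qed

lemma leafword_contract: "leafword (contract t) = leafword t"
  apply (induction t rule: contract.induct)
    apply auto
  apply (rule arg_cong[where f=concat])
  apply (rule map_cong)
   apply auto
  done

fun cmap :: "ctree \<Rightarrow> nat list \<Rightarrow> nat list" where
  "cmap t [] = []"
| "cmap (Node c ts) (i#p) = (if length ts = 1 then cmap (ts!i) p else i # cmap (ts!i) p)"

lemma cmap_G: "valid t p \<Longrightarrow> valid (contract t) (cmap t p) \<and> sub (contract t) (cmap t p) = contract (sub t p)"
proof (induction p arbitrary: t)
  case Nil then show ?case by simp
next
  case (Cons i p)
  obtain c ts where t: "t = Node c ts" by (cases t)
  have i: "i < length ts" "valid (ts!i) p" using Cons.prems t by auto
  show ?case
  proof (cases "length ts = 1")
    case True
    then obtain s where "ts = [s]" by (cases ts) auto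
    then show ?thesis using Cons.IH[of s] i t by auto
  next
    case False
    then show ?thesis using Cons.IH[of "ts!i"] i t by (simp add: contract_Node)
  qed
qed

lemma is_leaf_sub: "is_leaf t p \<longleftrightarrow> kids (sub t p) = []"
  by (simp add: is_leaf_def nkids_def)

lemma nondeg_sub: "nondeg t p \<longleftrightarrow> 2 \<le> length (kids (sub t p))"
  by (simp add: nondeg_def nkids_def)

lemma cmap_C1: "valid t p \<Longrightarrow> nondeg t p \<Longrightarrow> valid (contract t) (cmap t p) \<and> \<not> is_leaf (contract t) (cmap t p)"
proof -
  assume a: "valid t p" "nondeg t p"
  obtain c ks where s: "sub t p = Node c ks" by (cases "sub t p")
  then have "2 \<le> length ks" using a by (simp add: nondeg_sub)
  then have "ks \<noteq> []" by auto
  then show ?thesis using cmap_G[OF a(1)] s \<open>2 \<le> length ks\<close> by (simp add: is_leaf_sub contract_Node)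
qed

lemma cmap_Yv: "colored N t \<Longrightarrow> valid t p \<Longrightarrow> nondeg t p \<Longrightarrow> Yv (contract t) (cmap t p) = Yv t p"
proof -
  assume a: "colored N t" "valid t p" "nondeg t p"
  obtain c ks where s: "sub t p = Node c ks" by (cases "sub t p")
  then have k: "2 \<le> length ks" using a by (simp add: nondeg_sub)
  have cs: "colored N (sub t p)" using colored_sub a by blast
  have m: "map (col \<circ> contract) ks = map col ks"
    using cs s colored_contract by (auto simp: colored_Node')
  show ?thesis using cmap_G[OF a(2)] s k by (simp add: Yv_def vcol_def contract_Node m)
qed

lemma cmap_C2: "valid (contract t) w \<Longrightarrow> \<not> is_leaf (contract t) w \<Longrightarrow> \<exists>p. valid t p \<and> nondeg t p \<and> cmap t p = w"
proof (induction t arbitrary: w)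
  case (Node c ts)
  show ?case
  proof (cases "length ts = 1")
    case True
    then obtain s where ts: "ts = [s]" by (cases ts) auto
    then obtain p where "valid s p \<and> nondeg s p \<and> cmap s p = w" using Node by auto
    then show ?thesis using ts by (intro exI[of _ "0#p"]) auto
  next
    case False
    note cN = contract_Node[OF False]
    show ?thesis
    proof (cases w)
      case Nil
      then have "ts \<noteq> []" using Node.prems cN by auto
      have "2 \<le> length ts" using \<open>ts \<noteq> []\<close> False by (cases ts; cases "tl ts") auto
      then show ?thesis using Nil False by (intro exI[of _ "[]"]) auto
    next
      case (Cons i w')
      then have i: "i < length ts" "valid (contract (ts!i)) w'" "\<not> is_leaf (contract (ts!i)) w'"
        using Node.prems cN by auto
      then obtain p where "valid (ts!i) p \<and> nondeg (ts!i) p \<and> cmap (ts!i) p = w'"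
        using Node.IH[of "ts!i" w'] by auto
      then show ?thesis using i Cons False by (intro exI[of _ "i#p"]) auto
    qed
  qed
qed

lemma cmap_C34: "valid t p \<Longrightarrow> nondeg t p \<Longrightarrow> valid t q \<Longrightarrow> nondeg t q \<Longrightarrow>
   (cmap t p = cmap t q \<longrightarrow> p = q) \<and> (r_less (cmap t p) (cmap t q) \<longleftrightarrow> r_less p q)"
proof (induction t arbitrary: p q)
  case (Node c ts)
  show ?case
  proof (cases "length ts = 1")
    case True
    then obtain s where ts: "ts = [s]" by (cases ts) auto
    obtain p' where p: "p = 0#p'" using Node.prems ts by (cases p) auto
    obtain q' where q: "q = 0#q'" using Node.prems ts by (cases q) auto
    show ?thesis using Node.IH[of s p' q'] Node.prems ts p q by (auto simp: r_less_lex)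
  next
    case False
    show ?thesis
    proof (cases p)
      case Nil
      then show ?thesis using False by (cases q) (auto simp: r_less_lex)
    next
      case (Cons i p')
      show ?thesis
      proof (cases q)
        case Nil
        then show ?thesis using False Cons by (auto simp: r_less_lex)
      next
        case (Cons j q')
        show ?thesis
        proof (cases "i = j")
          case True
          then show ?thesis using Node.IH[of "ts!i" p' q'] Node.prems False Cons \<open>p = i#p'\<close>
            by (auto simp: r_less_lex)
        next
          case ne: False
          then show ?thesis using False Cons \<open>p = i#p'\<close> by (auto simp: r_less_lex)
        qed
      qed
    qed
  qed
qed

definition Coin :: "ctree \<Rightarrow> bool" where
  "Coin T \<longleftrightarrow> (\<forall>x\<in>verts T. \<forall>y\<in>verts T. nondeg T x \<and> nondeg T y \<longrightarrow> (bfs_less x y \<longleftrightarrow> r_less x y))"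

lemma left_of_irrefl: "\<not> left_of x x"
  using rl_irrefl by (simp add: left_of_lex)

lemma left_of_len: "left_of x y \<Longrightarrow> length x = length y"
  by (simp add: left_of_def)

lemma rl_append_right: "(y, take n x) \<in> rl \<Longrightarrow> length (take n x) = length y \<Longrightarrow> (y, x) \<in> rl"
  using lexord_sufI[of y "take n x" _ "[]" "drop n x"] by simp

lemma rl_prefix: "n < length x \<Longrightarrow> (take n x, x) \<in> rl"
proof -
  assume "n < length x"
  then obtain a v where "drop n x = a # v" by (cases "drop n x") auto
  then have "x = take n x @ a # v" by (metis append_take_drop_id)
  then show ?thesis by (metis lexord_append_rightI)
qed

lemma left_of_take: "left_of a b \<Longrightarrow> take n a = take n b \<or> left_of (take n a) (take n b)"
proof -
  assume "left_of a b"
  then obtain u i v j w where a: "a = u @ i # v" "b = u @ j # w" "i < j" "length a = length b"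
    unfolding left_of_def by blast
  show ?thesis
  proof (cases "n \<le> length u")
    case True then show ?thesis using a by simp
  next
    case False
    then have "take n a = u @ i # take (n - length u - 1) v" "take n b = u @ j # take (n - length u - 1) w"
      using a by (auto simp: take_Cons' )
    moreover have "length v = length w" using a by simp
    ultimately show ?thesis using a(3) unfolding left_of_def by auto
  qed
qed

lemma butlast_valid: "valid t x \<Longrightarrow> x \<noteq> [] \<Longrightarrow> valid t (butlast x) \<and> \<not> is_leaf t (butlast x)"
proof -
  assume a: "valid t x" "x \<noteq> []"
  then have x: "x = butlast x @ [last x]" by simp
  then have "valid t (butlast x)" "valid (sub t (butlast x)) [last x]" using a valid_append by metis+
  moreover obtain c ts where "sub t (butlast x) = Node c ts" by (cases "sub t (butlast x)")
  ultimately show ?thesis by (auto simp: is_leaf_sub)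
qed

lemma valid_take: "valid t x \<Longrightarrow> valid t (take n x)"
  by (metis append_take_drop_id valid_append)

lemma unary_or_nondeg: "\<not> is_leaf t p \<Longrightarrow> unary t p \<or> nondeg t p"
  by (auto simp: is_leaf_def unary_def nondeg_def)

lemma not_unary_nondeg: "nondeg t p \<Longrightarrow> \<not> unary t p"
  by (auto simp: unary_def nondeg_def)

lemma A1: "Coin t \<Longrightarrow> simple t"
  unfolding simple_def
proof (intro ballI impI, rule ccontr)
  fix x y assume C: "Coin t" and v: "x \<in> verts t" "y \<in> verts t"
    and nd: "nondeg t x \<and> nondeg t y \<and> length x = length y" and ne: "x \<noteq> y"
  from rl_total[OF ne] show False
  proof
    assume "(x,y) \<in> rl"
    then have "bfs_less x y" using nd by (simp add: bfs_less_def left_of_lex)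
    then have "r_less x y" using C v nd unfolding Coin_def by blast
    then show False using \<open>(x,y) \<in> rl\<close> rl_asym by (simp add: r_less_lex)
  next
    assume "(y,x) \<in> rl"
    then have "bfs_less y x" using nd by (simp add: bfs_less_def left_of_lex)
    then have "r_less y x" using C v nd unfolding Coin_def by blast
    then show False using \<open>(y,x) \<in> rl\<close> rl_asym by (simp add: r_less_lex)
  qed
qed

lemma A2: "layered t \<Longrightarrow> proper t \<Longrightarrow> Coin t \<Longrightarrow> order_reduced t"
  unfolding order_reduced_def
proof (intro allI notI)
  fix x assume L: "layered t" and P: "proper t" and C: "Coin t" and oc: "order_contractible_at t x"
  then have x: "x \<in> verts t" "x \<noteq> []" "nondeg t x" "unary t (butlast x)"
    and nl: "\<not> (\<exists>y\<in>verts t. nondeg t y \<and> left_of y (butlast x))"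
    unfolding order_contractible_at_def by auto
  have "\<not> is_leaf t x" using x by (auto simp: is_leaf_def nondeg_def)
  then have "length x < height t" using L x lay_nonleaf by (auto simp: layered_lay verts_def)
  then have "length x - 1 < nlayers t" by (simp add: nlayers_def)
  then obtain y where y: "y \<in> verts t" "length y = length x - 1" "nondeg t y" using P unfolding proper_def by blast
  have "y \<noteq> butlast x" using y x not_unary_nondeg by blast
  then have "(butlast x, y) \<in> rl \<or> (y, butlast x) \<in> rl" using rl_total by blast
  moreover have "\<not> left_of y (butlast x)" using nl y by blast
  ultimately have "(butlast x, y) \<in> rl" using y by (auto simp: left_of_lex)
  then have "(butlast x @ [last x], y @ []) \<in> rl" using y by (intro lexord_sufI) auto
  then have xy: "(x, y) \<in> rl" using x by simp
  have "bfs_less x y" using y x by (simp add: bfs_less_def)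
  then have "r_less x y" using C x y unfolding Coin_def by blast
  then show False using xy rl_asym by (simp add: r_less_lex)
qed

lemma A3_claim:
  assumes S: "simple t" and R: "order_reduced t"
  shows "x \<in> verts t \<Longrightarrow> nondeg t x \<Longrightarrow> length x = m \<Longrightarrow> y \<in> verts t \<Longrightarrow> nondeg t y \<Longrightarrow> length y < m
     \<Longrightarrow> \<not> left_of (take (length y) x) y"
proof (induction m arbitrary: x y)
  case 0 then show ?case by simp
next
  case (Suc m)
  define x' where "x' = butlast x"
  define n where "n = length y"
  have xne: "x \<noteq> []" using Suc.prems by auto
  have x'v: "x' \<in> verts t" "\<not> is_leaf t x'" using butlast_valid[of t x] Suc.prems xne
    by (auto simp: x'_def verts_def)
  have lx': "length x' = m" using Suc.prems by (simp add: x'_def)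
  have tk: "take n x = take n x'" using Suc.prems by (simp add: x'_def n_def take_butlast)
  show ?case
  proof (cases "nondeg t x'")
    case True
    show ?thesis
    proof (cases "n = m")
      case True
      then have "y = x'" using S \<open>nondeg t x'\<close> x'v Suc.prems lx' unfolding simple_def n_def by metis
      then show ?thesis using tk True lx' left_of_irrefl by (simp add: n_def)
    next
      case False
      then show ?thesis using Suc.IH[of x' y] True x'v lx' Suc.prems tk by (simp add: n_def)
    qed
  next
    case False
    then have un: "unary t x'" using unary_or_nondeg x'v by blast
    have "\<not> order_contractible_at t x" using R by (simp add: order_reduced_def)
    then have "(\<exists>z\<in>verts t. nondeg t z \<and> left_of x z) \<or> (\<exists>y0\<in>verts t. nondeg t y0 \<and> left_of y0 x')"
      using Suc.prems xne un unfolding order_contractible_at_def x'_def by blast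
    moreover have "\<not> (\<exists>z\<in>verts t. nondeg t z \<and> left_of x z)"
    proof
      assume "\<exists>z\<in>verts t. nondeg t z \<and> left_of x z"
      then obtain z where "z \<in> verts t" "nondeg t z" "left_of x z" by blast
      then have "x = z" using S Suc.prems left_of_len unfolding simple_def by metis
      then show False using \<open>left_of x z\<close> left_of_irrefl by simp
    qed
    ultimately obtain y0 where y0: "y0 \<in> verts t" "nondeg t y0" "left_of y0 x'" by blast
    have ly0: "length y0 = m" using y0 lx' left_of_len by metis
    show ?thesis
    proof (cases "n = m")
      case True
      then have "y = y0" using S y0 Suc.prems ly0 unfolding simple_def n_def by metis
      moreover have "take n x = x'" using tk True lx' by simp
      ultimately show ?thesis using y0 rl_asym by (auto simp: left_of_lex n_def)
    next
      case False
      then have ih: "\<not> left_of (take n y0) y" using Suc.IH[of y0 y] y0 ly0 Suc.prems by (simp add: n_def)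
      show ?thesis
      proof
        assume a: "left_of (take (length y) x) y"
        have "take n y0 = take n x' \<or> left_of (take n y0) (take n x')" using left_of_take y0 by blast
        then show False
        proof
          assume "take n y0 = take n x'" then show False using a ih tk by (simp add: n_def)
        next
          assume "left_of (take n y0) (take n x')"
          then have "left_of (take n y0) y" using a tk rl_trans unfolding left_of_lex n_def by auto
          then show False using ih by simp
        qed
      qed
    qed
  qed
qed

lemma A3_rl:
  assumes S: "simple t" and R: "order_reduced t"
    and x: "x \<in> verts t" "nondeg t x" and y: "y \<in> verts t" "nondeg t y" and l: "length y < length x"
  shows "(y, x) \<in> rl"
proof -
  define n where "n = length y"
  have nl: "\<not> left_of (take n x) y" using A3_claim[OF S R x refl y l] by (simp add: n_def)
  have len: "length (take n x) = length y" using l by (simp add: n_def)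
  show ?thesis
  proof (cases "take n x = y")
    case True then show ?thesis using rl_prefix[of n x] l by (simp add: n_def)
  next
    case False
    then have "(take n x, y) \<in> rl \<or> (y, take n x) \<in> rl" using rl_total by blast
    then have "(y, take n x) \<in> rl" using nl len by (auto simp: left_of_lex)
    then show ?thesis using rl_append_right len by metis
  qed
qed

lemma A3: "simple t \<Longrightarrow> order_reduced t \<Longrightarrow> Coin t"
  unfolding Coin_def
proof (intro ballI impI)
  fix x y assume S: "simple t" and R: "order_reduced t" and v: "x \<in> verts t" "y \<in> verts t"
    and nd: "nondeg t x \<and> nondeg t y"
  consider "length x = length y" | "length y < length x" | "length x < length y" by linarith
  then show "bfs_less x y \<longleftrightarrow> r_less x y"
  proof cases
    case 1
    then have "x = y" using S v nd unfolding simple_def by blast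
    then show ?thesis using left_of_irrefl rl_irrefl by (simp add: bfs_less_def r_less_lex)
  next
    case 2
    then show ?thesis using A3_rl[OF S R] v nd by (simp add: bfs_less_def r_less_lex)
  next
    case 3
    then have "(x, y) \<in> rl" using A3_rl[OF S R] v nd by simp
    then show ?thesis using 3 rl_asym by (auto simp: bfs_less_def r_less_lex dest: left_of_len)
  qed
qed

lemma partA: "layered t \<Longrightarrow> proper t \<Longrightarrow> Coin t \<longleftrightarrow> simple t \<and> order_reduced t"
  using A1 A2 A3 by blast

definition ND :: "ctree \<Rightarrow> nat list set" where "ND t = {p\<in>verts t. nondeg t p}"
definition IN :: "ctree \<Rightarrow> nat list set" where "IN t = {p\<in>verts t. \<not> is_leaf t p}"
definition rk :: "ctree \<Rightarrow> nat list \<Rightarrow> nat" where "rk T w = card {v\<in>IN T. r_less w v}"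

lemma finite_ND: "finite (ND t)" and finite_IN: "finite (IN t)"
  using finite_verts by (auto simp: ND_def IN_def)

lemma cmap_image: "cmap t ` ND t = IN (contract t)"
  using cmap_C1 cmap_C2 by (fastforce simp: ND_def IN_def verts_def)

lemma cmap_inj: "inj_on (cmap t) (ND t)"
  using cmap_C34 by (auto simp: inj_on_def ND_def verts_def)

lemma card_IN_ND: "card (IN (contract t)) = card (ND t)"
  by (metis cmap_image cmap_inj card_image)

lemma nv_IN: "nv T = card (IN T)" by (simp add: nv_def IN_def)

lemma ND_length_bij:
  assumes L: "layered t" and P: "proper t" and S: "simple t"
  shows "bij_betw length (ND t) {..<height t}"
proof -
  have "inj_on length (ND t)" using S by (auto simp: inj_on_def simple_def ND_def)
  moreover have "length ` ND t \<subseteq> {..<height t}"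
  proof
    fix k assume "k \<in> length ` ND t"
    then obtain p where "p \<in> ND t" "k = length p" by blast
    then have "\<not> is_leaf t p" "valid t p" by (auto simp: ND_def is_leaf_def nondeg_def verts_def)
    then show "k \<in> {..<height t}" using lay_nonleaf L \<open>k = length p\<close> by (auto simp: layered_lay)
  qed
  moreover have "{..<height t} \<subseteq> length ` ND t"
    using P by (force simp: proper_def nlayers_def ND_def)
  ultimately show ?thesis by (auto simp: bij_betw_def)
qed

lemma card_ND: "layered t \<Longrightarrow> proper t \<Longrightarrow> simple t \<Longrightarrow> card (ND t) = height t"
  using ND_length_bij bij_betw_same_card by fastforce

lemma level_formula:
  assumes L: "layered t" and P: "proper t" and S: "simple t" and C: "Coin t" and p: "p \<in> ND t"
  shows "length p = rk (contract t) (cmap t p)"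
proof -
  have bij: "bij_betw length (ND t) {..<height t}" using ND_length_bij L P S by blast
  have lp: "length p < height t" using bij p by (auto simp: bij_betw_def)
  have A: "{q\<in>ND t. length q < length p} = {q\<in>ND t. r_less p q}"
  proof -
    { fix q assume q: "q \<in> ND t"
      have "r_less p q \<longleftrightarrow> bfs_less p q" using C p q by (auto simp: Coin_def ND_def)
      also have "\<dots> \<longleftrightarrow> length q < length p"
      proof -
        have "\<not> left_of p q"
        proof
          assume "left_of p q"
          then have "length p = length q" by (rule left_of_len)
          then have "p = q" using S p q unfolding simple_def ND_def by blast
          then show False using \<open>left_of p q\<close> left_of_irrefl by simp
        qed
        then show ?thesis by (simp add: bfs_less_def)
      qed
      finally have "r_less p q \<longleftrightarrow> length q < length p" . }
    then show ?thesis by auto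
  qed
  have "bij_betw length {q\<in>ND t. length q < length p} {..<length p}"
  proof -
    have "length ` {q\<in>ND t. length q < length p} = {..<length p}"
    proof
      show "length ` {q\<in>ND t. length q < length p} \<subseteq> {..<length p}" by auto
      show "{..<length p} \<subseteq> length ` {q\<in>ND t. length q < length p}"
      proof
        fix k assume "k \<in> {..<length p}"
        then have "k \<in> length ` ND t" using bij lp by (auto simp: bij_betw_def)
        then show "k \<in> length ` {q\<in>ND t. length q < length p}" using \<open>k \<in> {..<length p}\<close> by auto
      qed
    qed
    moreover have "inj_on length {q\<in>ND t. length q < length p}"
      using bij by (auto simp: bij_betw_def inj_on_def)
    ultimately show ?thesis by (auto simp: bij_betw_def)
  qed
  then have "card {q\<in>ND t. r_less p q} = length p" using A bij_betw_same_card by fastforce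
  moreover have "cmap t ` {q\<in>ND t. r_less p q} = {v\<in>IN (contract t). r_less (cmap t p) v}"
  proof
    show "cmap t ` {q\<in>ND t. r_less p q} \<subseteq> {v\<in>IN (contract t). r_less (cmap t p) v}"
      using cmap_image cmap_C34 p by (auto simp: ND_def verts_def)
    show "{v\<in>IN (contract t). r_less (cmap t p) v} \<subseteq> cmap t ` {q\<in>ND t. r_less p q}"
    proof
      fix v assume v: "v \<in> {v\<in>IN (contract t). r_less (cmap t p) v}"
      then obtain q where q: "q \<in> ND t" "v = cmap t q" using cmap_image by blast
      then have "r_less p q" using v cmap_C34 p by (auto simp: ND_def verts_def)
      then show "v \<in> cmap t ` {q\<in>ND t. r_less p q}" using q by auto
    qed
  qed
  moreover have "inj_on (cmap t) {q\<in>ND t. r_less p q}" using cmap_inj by (auto simp: inj_on_def)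
  ultimately show ?thesis unfolding rk_def by (metis card_image)
qed

lemma r_less_trans: "r_less x y \<Longrightarrow> r_less y z \<Longrightarrow> r_less x z"
  using rl_trans by (simp add: r_less_lex)

lemma r_less_irrefl: "\<not> r_less x x"
  using rl_irrefl by (simp add: r_less_lex)

lemma r_less_total: "x \<noteq> y \<Longrightarrow> r_less x y \<or> r_less y x"
  using rl_total by (auto simp: r_less_lex)

lemma r_less_asym: "r_less x y \<Longrightarrow> \<not> r_less y x"
  using rl_asym by (simp add: r_less_lex)

lemma rk_less: "w \<in> IN T \<Longrightarrow> rk T w < card (IN T)"
  unfolding rk_def using finite_IN r_less_irrefl
  by (intro psubset_card_mono) auto

lemma rk_mono: "w \<in> IN T \<Longrightarrow> v \<in> IN T \<Longrightarrow> r_less w v \<Longrightarrow> rk T v < rk T w"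
proof -
  assume a: "w \<in> IN T" "v \<in> IN T" "r_less w v"
  have "{x\<in>IN T. r_less v x} \<subseteq> {x\<in>IN T. r_less w x}" using a r_less_trans by blast
  moreover have "v \<in> {x\<in>IN T. r_less w x}" "v \<notin> {x\<in>IN T. r_less v x}" using a r_less_irrefl by auto
  ultimately have "{x\<in>IN T. r_less v x} \<subset> {x\<in>IN T. r_less w x}" by blast
  then show ?thesis unfolding rk_def using finite_IN by (intro psubset_card_mono) auto
qed

lemma rk_iff: "w \<in> IN T \<Longrightarrow> v \<in> IN T \<Longrightarrow> r_less w v \<longleftrightarrow> rk T v < rk T w"
proof
  assume "w \<in> IN T" "v \<in> IN T" "r_less w v" then show "rk T v < rk T w" by (rule rk_mono)
next
  assume a: "w \<in> IN T" "v \<in> IN T" "rk T v < rk T w"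
  then have "w \<noteq> v" by auto
  then have "r_less w v \<or> r_less v w" by (rule r_less_total)
  moreover have "\<not> r_less v w"
  proof
    assume "r_less v w" then have "rk T w < rk T v" using rk_mono a by blast
    then show False using a by simp
  qed
  ultimately show "r_less w v" by blast
qed

lemma rk_inj: "inj_on (rk T) (IN T)"
proof (rule inj_onI, rule ccontr)
  fix x y assume a: "x \<in> IN T" "y \<in> IN T" "rk T x = rk T y" "x \<noteq> y"
  then have "r_less x y \<or> r_less y x" using r_less_total by blast
  then show False using rk_mono a by (metis less_irrefl)
qed

lemma rk_image: "rk T ` IN T = {..<card (IN T)}"
proof -
  have "rk T ` IN T \<subseteq> {..<card (IN T)}" using rk_less by auto
  moreover have "card (rk T ` IN T) = card {..<card (IN T)}" using rk_inj card_image by fastforce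
  ultimately show ?thesis using card_subset_eq by blast
qed

lemma root_unary_forces:
  assumes l1: "lay n t1" and l2: "lay n t2" and ce: "contract t1 = contract t2"
    and H: "\<forall>p1 p2. p1 \<in> ND t1 \<and> p2 \<in> ND t2 \<and> cmap t1 p1 = cmap t2 p2 \<longrightarrow> length p1 = length p2"
    and t1: "t1 = Node c1 [s]" and t2: "t2 = Node c2 ts2"
  shows "length ts2 = 1"
proof (rule ccontr)
  assume ne: "length ts2 \<noteq> 1"
  have "0 < n" using l1 t1 by (auto simp: lay_Node)
  then have "ts2 \<noteq> []" using l2 t2 by (auto simp: lay_Node)
  then have "2 \<le> length ts2" using ne by (cases ts2; cases "tl ts2") auto
  then have nd: "[] \<in> ND t2" using t2 by (simp add: ND_def)
  then have "cmap t2 [] \<in> IN (contract t2)" using cmap_image by blast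
  then have "[] \<in> IN (contract t1)" using ce by simp
  then obtain p1 where p1: "p1 \<in> ND t1" "cmap t1 p1 = []" using cmap_image[of t1] by force
  have "p1 \<noteq> []" using p1 t1 by (auto simp: ND_def)
  moreover have "length p1 = length ([]::nat list)" using H[rule_format, of p1 "[]"] p1 nd by simp
  ultimately show False by simp
qed

lemma uniq:
  "lay n t1 \<Longrightarrow> lay n t2 \<Longrightarrow> colored N t1 \<Longrightarrow> colored N t2 \<Longrightarrow> contract t1 = contract t2 \<Longrightarrow>
   (\<forall>p1 p2. p1 \<in> ND t1 \<and> p2 \<in> ND t2 \<and> cmap t1 p1 = cmap t2 p2 \<longrightarrow> length p1 = length p2) \<Longrightarrow> t1 = t2"
proof (induction t1 arbitrary: t2 n)
  case (Node c1 ts1)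
  obtain c2 ts2 where t2: "t2 = Node c2 ts2" by (cases t2)
  have "c1 = c2" using colored_contract[OF Node.prems(3)] colored_contract[OF Node.prems(4)] Node.prems(5) t2 by simp
  have H': "\<forall>p1 p2. p1 \<in> ND t2 \<and> p2 \<in> ND (Node c1 ts1) \<and> cmap t2 p1 = cmap (Node c1 ts1) p2 \<longrightarrow> length p1 = length p2"
    using Node.prems(6) by metis
  show ?case
  proof (cases "length ts1 = 1")
    case True
    then obtain s1 where s1: "ts1 = [s1]" by (cases ts1) auto
    have "length ts2 = 1" using root_unary_forces[OF Node.prems(1,2,5,6) s1[THEN arg_cong[where f="Node c1"]] t2] .
    then obtain s2 where s2: "ts2 = [s2]" by (cases ts2) auto
    have n: "0 < n" "lay (n-1) s1" "lay (n-1) s2" using Node.prems(1,2) s1 s2 t2 by (auto simp: lay_Node)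
    have "colored N s1" "colored N s2" using Node.prems(3,4) s1 s2 t2 by (auto simp: colored_Node')
    moreover have "contract s1 = contract s2" using Node.prems(5) s1 s2 t2 by simp
    moreover have "\<forall>p1 p2. p1 \<in> ND s1 \<and> p2 \<in> ND s2 \<and> cmap s1 p1 = cmap s2 p2 \<longrightarrow> length p1 = length p2"
    proof (intro allI impI)
      fix p1 p2 assume a: "p1 \<in> ND s1 \<and> p2 \<in> ND s2 \<and> cmap s1 p1 = cmap s2 p2"
      then have "0#p1 \<in> ND (Node c1 ts1) \<and> 0#p2 \<in> ND t2 \<and> cmap (Node c1 ts1) (0#p1) = cmap t2 (0#p2)"
        using s1 s2 t2 by (auto simp: ND_def)
      then show "length p1 = length p2" using Node.prems(6) by fastforce
    qed
    ultimately have "s1 = s2" using Node.IH[of s1 "n-1" s2] n s1 by auto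
    then show ?thesis using s1 s2 t2 \<open>c1 = c2\<close> by simp
  next
    case False
    have "length ts2 \<noteq> 1"
    proof
      assume "length ts2 = 1"
      then obtain s2 where s2: "ts2 = [s2]" by (cases ts2) auto
      have "length ts1 = 1" using root_unary_forces[OF Node.prems(2,1) Node.prems(5)[symmetric] H' t2[unfolded s2], of c1 ts1] by simp
      then show False using False by simp
    qed
    show ?thesis
    proof (cases "ts1 = []")
      case True
      then have "n = 0" using Node.prems(1) by (simp add: lay_Node)
      then have "ts2 = []" using Node.prems(2) t2 by (simp add: lay_Node)
      then show ?thesis using True t2 \<open>c1 = c2\<close> by simp
    next
      case ne1: False
      then have n: "0 < n" "\<forall>i<length ts1. lay (n-1) (ts1!i)" using Node.prems(1) by (auto simp: lay_Node)
      then have "ts2 \<noteq> []" "\<forall>i<length ts2. lay (n-1) (ts2!i)" using Node.prems(2) t2 by (auto simp: lay_Node)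
      have "map contract ts1 = map contract ts2"
        using Node.prems(5) t2 False \<open>length ts2 \<noteq> 1\<close> by (simp add: contract_Node)
      then have len: "length ts1 = length ts2" and ce: "\<forall>i<length ts1. contract (ts1!i) = contract (ts2!i)"
        by (metis length_map, metis length_map nth_map)
      have col: "\<forall>i<length ts1. colored N (ts1!i) \<and> colored N (ts2!i)"
        using Node.prems(3,4) t2 len by (auto simp: colored_Node)
      have "\<forall>i<length ts1. ts1!i = ts2!i"
      proof (intro allI impI)
        fix i assume i: "i < length ts1"
        have "\<forall>p1 p2. p1 \<in> ND (ts1!i) \<and> p2 \<in> ND (ts2!i) \<and> cmap (ts1!i) p1 = cmap (ts2!i) p2 \<longrightarrow> length p1 = length p2"
        proof (intro allI impI)
          fix p1 p2 assume a: "p1 \<in> ND (ts1!i) \<and> p2 \<in> ND (ts2!i) \<and> cmap (ts1!i) p1 = cmap (ts2!i) p2"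
          then have "i#p1 \<in> ND (Node c1 ts1) \<and> i#p2 \<in> ND t2 \<and> cmap (Node c1 ts1) (i#p1) = cmap t2 (i#p2)"
            using t2 i len False \<open>length ts2 \<noteq> 1\<close> by (auto simp: ND_def)
          then show "length p1 = length p2" using Node.prems(6) by fastforce
        qed
        then show "ts1!i = ts2!i" using Node.IH[of "ts1!i" "n-1" "ts2!i"] i n col ce len
          \<open>\<forall>i<length ts2. lay (n-1) (ts2!i)\<close> by auto
      qed
      then have "ts1 = ts2" using len by (simp add: nth_equalityI)
      then show ?thesis using t2 \<open>c1 = c2\<close> by simp
    qed
  qed
qed

lemma sorted_unique:
  "(\<forall>x\<in>set xs. \<forall>y\<in>set xs. R x y \<longrightarrow> \<not> R y x) \<Longrightarrow> sorted_wrt R xs \<Longrightarrow> sorted_wrt R ys \<Longrightarrow> set xs = set ys \<Longrightarrow> xs = ys"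
proof (induction xs arbitrary: ys)
  case Nil then show ?case by simp
next
  case (Cons x xs)
  obtain y ys' where ys: "ys = y # ys'" using Cons.prems(4) by (cases ys) auto
  have xy: "x = y"
  proof (rule ccontr)
    assume "x \<noteq> y"
    then have "y \<in> set xs" "x \<in> set ys'" using Cons.prems(4) ys by auto
    then have "R x y" "R y x" using Cons.prems(2,3) ys by auto
    then show False using Cons.prems(1) \<open>y \<in> set xs\<close> by auto
  qed
  have "x \<notin> set xs" using Cons.prems(1,2) by auto
  moreover have "y \<notin> set ys'"
  proof
    assume "y \<in> set ys'"
    then have "R y y" using Cons.prems(3) ys by auto
    moreover have "y \<in> set (x#xs)" using Cons.prems(4) ys by auto
    ultimately show False using Cons.prems(1) by blast
  qed
  ultimately have "set xs = set ys'" using Cons.prems(4) ys xy by auto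
  then show ?case using Cons.IH[of ys'] Cons.prems ys xy by auto
qed

lemma exists_sorted:
  "finite S \<Longrightarrow> (\<And>A. A \<subseteq> S \<Longrightarrow> A \<noteq> {} \<Longrightarrow> \<exists>m\<in>A. \<forall>y\<in>A. y \<noteq> m \<longrightarrow> R m y) \<Longrightarrow> \<exists>xs. sorted_wrt R xs \<and> set xs = S"
proof (induction "card S" arbitrary: S rule: less_induct)
  case less
  show ?case
  proof (cases "S = {}")
    case True then show ?thesis by auto
  next
    case False
    then obtain m where m: "m \<in> S" "\<forall>y\<in>S. y \<noteq> m \<longrightarrow> R m y" using less.prems(2)[of S] by auto
    have "card (S - {m}) < card S" using m less.prems(1) by (meson card_Diff1_less)
    moreover have "\<And>A. A \<subseteq> S - {m} \<Longrightarrow> A \<noteq> {} \<Longrightarrow> \<exists>m\<in>A. \<forall>y\<in>A. y \<noteq> m \<longrightarrow> R m y"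
      using less.prems(2) by blast
    ultimately obtain xs where "sorted_wrt R xs" "set xs = S - {m}"
      using less.hyps[of "S - {m}"] less.prems(1) by blast
    then show ?thesis using m by (intro exI[of _ "m#xs"]) auto
  qed
qed

lemma bfs_asym: "bfs_less x y \<Longrightarrow> \<not> bfs_less y x"
  unfolding bfs_less_def using rl_asym by (auto simp: left_of_lex)

lemma r_less_asym': "r_less x y \<Longrightarrow> \<not> r_less y x"
  using rl_asym by (simp add: r_less_lex)

lemma OST_props: "T \<in> OST N u j \<Longrightarrow> colored N T \<and> layered T \<and> proper T \<and> simple T \<and> order_reduced T
   \<and> Coin T \<and> lay (height T) T \<and> col T = j \<and> leafword T = u"
  unfolding OST_def using A3 layered_lay by auto

lemma OST_height: "layered T \<Longrightarrow> proper T \<Longrightarrow> simple T \<Longrightarrow> height T = nv (contract T)"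
  using card_ND[of T] card_IN_ND[of T] nv_IN[of "contract T"] by simp

lemma contract_RT: "T \<in> OST N u j \<Longrightarrow> contract T \<in> RT N u j"
proof -
  assume a: "T \<in> OST N u j"
  show ?thesis using OST_props[OF a] colored_contract[of N T] reduced_contract[of T] leafword_contract[of T]
    by (simp add: RT_def)
qed

lemma inj_OST: "inj_on contract (OST N u j)"
proof (rule inj_onI)
  fix T1 T2 assume a: "T1 \<in> OST N u j" "T2 \<in> OST N u j" "contract T1 = contract T2"
  note p1 = OST_props[OF a(1)] and p2 = OST_props[OF a(2)]
  have h: "height T1 = height T2" using OST_height[of T1] OST_height[of T2] p1 p2 a(3) by simp
  show "T1 = T2"
  proof (rule uniq[of "height T1" T1 T2 N])
    show "lay (height T1) T1" using p1 by blast
    show "lay (height T1) T2" using p2 h by simp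
    show "colored N T1" "colored N T2" using p1 p2 by auto
    show "contract T1 = contract T2" by fact
    show "\<forall>p1 p2. p1 \<in> ND T1 \<and> p2 \<in> ND T2 \<and> cmap T1 p1 = cmap T2 p2 \<longrightarrow> length p1 = length p2"
    proof (intro allI impI)
      fix q1 q2 assume q: "q1 \<in> ND T1 \<and> q2 \<in> ND T2 \<and> cmap T1 q1 = cmap T2 q2"
      have "length q1 = rk (contract T1) (cmap T1 q1)" using level_formula[of T1 q1] p1 q by blast
      moreover have "length q2 = rk (contract T2) (cmap T2 q2)" using level_formula[of T2 q2] p2 q by blast
      ultimately show "length q1 = length q2" using q a(3) by simp
    qed
  qed
qed

lemma partC:
  assumes T: "T' \<in> OST N u j"
  shows "Omega T' = Lambda_r (contract T') \<and> nlayers T' = nv (contract T')"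
proof -
  note p = OST_props[OF T]
  have S: "simple T'" and C: "Coin T'" and Col: "colored N T'" using p by auto
  have "\<exists>xs. sorted_wrt bfs_less xs \<and> set xs = ND T'"
  proof (rule exists_sorted[OF finite_ND])
    fix A assume A: "A \<subseteq> ND T'" "A \<noteq> {}"
    then have fA: "finite (length ` A)" using finite_ND finite_subset by blast
    then have "Max (length ` A) \<in> length ` A" using A by simp
    then obtain m where m: "m \<in> A" "length m = Max (length ` A)" by auto
    have "\<forall>y\<in>A. y \<noteq> m \<longrightarrow> bfs_less m y"
    proof (intro ballI impI)
      fix y assume y: "y \<in> A" "y \<noteq> m"
      have "length y \<le> length m" using m y fA by simp
      moreover have "length y \<noteq> length m" using S A y m unfolding simple_def ND_def by blast
      ultimately show "bfs_less m y" by (simp add: bfs_less_def)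
    qed
    then show "\<exists>m\<in>A. \<forall>y\<in>A. y \<noteq> m \<longrightarrow> bfs_less m y" using m by blast
  qed
  then obtain xs where xs: "sorted_wrt bfs_less xs" "set xs = ND T'" by blast
  have O: "Omega T' = hprod (map (Yv T') xs)"
  proof -
    have "(THE xs. sorted_wrt bfs_less xs \<and> set xs = {x\<in>verts T'. nondeg T' x}) = xs"
    proof (rule the_equality)
      show "sorted_wrt bfs_less xs \<and> set xs = {x\<in>verts T'. nondeg T' x}" using xs by (simp add: ND_def)
      fix ys assume "sorted_wrt bfs_less ys \<and> set ys = {x\<in>verts T'. nondeg T' x}"
      then show "ys = xs" using sorted_unique[of ys bfs_less xs] xs bfs_asym by (auto simp: ND_def)
    qed
    then show ?thesis by (simp add: Omega_def)
  qed
  define ys where "ys = map (cmap T') xs"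
  have ys1: "sorted_wrt r_less ys"
  proof -
    have "sorted_wrt (\<lambda>x y. r_less (cmap T' x) (cmap T' y)) xs"
    proof (rule sorted_wrt_mono_rel[OF _ xs(1)])
      fix x y assume "x \<in> set xs" "y \<in> set xs" "bfs_less x y"
      then show "r_less (cmap T' x) (cmap T' y)" using xs(2) C cmap_C34
        by (auto simp: Coin_def ND_def verts_def)
    qed
    then show ?thesis by (simp add: ys_def sorted_wrt_map)
  qed
  have ys2: "set ys = IN (contract T')" using xs(2) cmap_image by (simp add: ys_def)
  have L: "Lambda_r (contract T') = hprod (map (Yv (contract T')) ys)"
  proof -
    have "(THE xs. sorted_wrt r_less xs \<and> set xs = {x\<in>verts (contract T'). \<not> is_leaf (contract T') x}) = ys"
    proof (rule the_equality)
      show "sorted_wrt r_less ys \<and> set ys = {x\<in>verts (contract T'). \<not> is_leaf (contract T') x}"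
        using ys1 ys2 by (simp add: IN_def)
      fix zs assume "sorted_wrt r_less zs \<and> set zs = {x\<in>verts (contract T'). \<not> is_leaf (contract T') x}"
      then show "zs = ys" using sorted_unique[of zs r_less ys] ys1 ys2 r_less_asym' by (auto simp: IN_def)
    qed
    then show ?thesis by (simp add: Lambda_r_def)
  qed
  have "map (Yv (contract T')) ys = map (Yv T') xs"
    unfolding ys_def using xs(2) cmap_Yv[OF Col] by (auto simp: ND_def verts_def)
  then have "Omega T' = Lambda_r (contract T')" using O L by simp
  moreover have "nlayers T' = nv (contract T')" using OST_height p by (simp add: nlayers_def)
  ultimately show ?thesis by blast
qed

function bld :: "(nat list \<Rightarrow> nat) \<Rightarrow> nat \<Rightarrow> nat \<Rightarrow> nat list \<Rightarrow> ctree \<Rightarrow> ctree" where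
  "bld R h k w (Node c ts) = (if k < (if ts = [] then h else R w) then Node c [bld R h (Suc k) w (Node c ts)]
     else Node c (map (\<lambda>i. bld R h (Suc k) (w@[i]) (ts!i)) [0..<length ts]))"
  by pat_completeness auto
termination
  apply (relation "measures [\<lambda>(R,h,k,w,t). size t, \<lambda>(R,h,k,w,t). (if kids t = [] then h else R w) - k]")
    apply auto
  apply (simp add: less_Suc_eq_le)
  apply (rule size_list_estimation'[OF nth_mem]) apply auto
  done

lemma ND_leaf: "ND (Node c []) = {}"
proof -
  { fix p assume "p \<in> ND (Node c [])" then have False by (cases p) (auto simp: ND_def) }
  then show ?thesis by blast
qed

lemma reduced_sub_len: "reduced T0 \<Longrightarrow> valid T0 w \<Longrightarrow> length (kids (sub T0 w)) \<noteq> 1"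
  by (auto simp: reduced_def unary_def nkids_def verts_def)

lemma bld_props:
  assumes RD: "reduced T0"
  shows "(\<forall>v. v \<in> IN T0 \<longrightarrow> R v < h) \<Longrightarrow> (\<forall>v i. v @ [i] \<in> IN T0 \<longrightarrow> R v < R (v @ [i])) \<Longrightarrow> valid T0 w \<Longrightarrow> sub T0 w = t \<Longrightarrow> k \<le> (if kids t = [] then h else R w) \<Longrightarrow>
    lay (h - k) (bld R h k w t) \<and> k \<le> h \<and> (\<forall>p \<in> ND (bld R h k w t). k + length p = R (w @ cmap (bld R h k w t) p))
    \<and> contract (bld R h k w t) = t \<and> (colored N t \<longrightarrow> colored N (bld R h k w t)) \<and> col (bld R h k w t) = col t"
proof (induction R h k w t rule: bld.induct)
  case (1 R h k w c ts)
  define B where "B = (if ts = [] then h else R w)"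
  show ?case
  proof (cases "k < B")
    case True
    define x where "x = bld R h (Suc k) w (Node c ts)"
    have e: "bld R h k w (Node c ts) = Node c [x]" using True by (simp add: x_def B_def)
    have IH: "lay (h - Suc k) x \<and> Suc k \<le> h \<and> (\<forall>p \<in> ND x. Suc k + length p = R (w @ cmap x p))
      \<and> contract x = Node c ts \<and> (colored N (Node c ts) \<longrightarrow> colored N x) \<and> col x = c"
      using "1.IH"(1) True "1.prems" unfolding x_def B_def by auto
    have ND: "\<forall>p \<in> ND (Node c [x]). k + length p = R (w @ cmap (Node c [x]) p)"
    proof
      fix p assume p: "p \<in> ND (Node c [x])"
      then obtain p' where "p = 0#p'" "p' \<in> ND x" by (cases p) (auto simp: ND_def)
      then show "k + length p = R (w @ cmap (Node c [x]) p)" using IH by auto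
    qed
    have "lay (h - k) (Node c [x])" using IH by (auto simp: lay_Node Suc_diff_Suc)
    then show ?thesis unfolding e using IH ND by (auto simp: colored_Node')
  next
    case False
    then have kB: "k = B" using "1.prems" by (simp add: B_def)
    define ts' where "ts' = map (\<lambda>i. bld R h (Suc k) (w@[i]) (ts!i)) [0..<length ts]"
    have e: "bld R h k w (Node c ts) = Node c ts'" using False by (simp add: ts'_def B_def)
    show ?thesis
    proof (cases "ts = []")
      case True
      then show ?thesis using e kB by (simp add: ts'_def B_def lay_Node ND_leaf)
    next
      case ne: False
      have l2: "length ts \<noteq> 1" using reduced_sub_len[OF RD "1.prems"(3)] "1.prems"(4) by simp
      have wIN: "w \<in> IN T0" using "1.prems"(3,4) ne by (auto simp: IN_def verts_def is_leaf_sub)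
      have kR: "k = R w" "R w < h" using kB ne "1.prems"(1) wIN by (auto simp: B_def)
      have IH: "\<And>i. i < length ts \<Longrightarrow> lay (h - Suc k) (ts'!i) \<and>
          (\<forall>p \<in> ND (ts'!i). Suc k + length p = R ((w@[i]) @ cmap (ts'!i) p))
          \<and> contract (ts'!i) = ts!i \<and> (colored N (ts!i) \<longrightarrow> colored N (ts'!i)) \<and> col (ts'!i) = col (ts!i)"
      proof -
        fix i assume i: "i < length ts"
        have v: "valid T0 (w@[i])" "sub T0 (w@[i]) = ts!i"
          using "1.prems"(3,4) i by (auto simp: valid_append sub_append)
        have sk: "Suc k \<le> (if kids (ts!i) = [] then h else R (w@[i]))"
        proof (cases "kids (ts!i) = []")
          case True then show ?thesis using kR by simp
        next
          case False
          then have "w@[i] \<in> IN T0" using v by (auto simp: IN_def verts_def is_leaf_sub)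
          then have "R w < R (w @ [i])" using "1.prems"(2) by blast
          then show ?thesis using kR False by simp
        qed
        show "?thesis i" using "1.IH"(2)[of i] False v i sk "1.prems"(1,2) unfolding ts'_def B_def by auto
      qed
      have lts: "length ts' = length ts" by (simp add: ts'_def)
      have ND: "\<forall>p \<in> ND (Node c ts'). k + length p = R (w @ cmap (Node c ts') p)"
      proof
        fix p assume p: "p \<in> ND (Node c ts')"
        show "k + length p = R (w @ cmap (Node c ts') p)"
        proof (cases p)
          case Nil then show ?thesis using kR by simp
        next
          case (Cons i p')
          then have "i < length ts" "p' \<in> ND (ts'!i)" using p lts by (auto simp: ND_def)
          then show ?thesis using IH[of i] Cons lts l2 by auto
        qed
      qed
      have "lay (h - k) (Node c ts')" using IH kR lts ne by (auto simp: lay_Node)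
      moreover have "contract (Node c ts') = Node c ts"
        using IH lts l2 by (auto simp: contract_Node intro!: nth_equalityI)
      moreover have "colored N (Node c ts) \<longrightarrow> colored N (Node c ts')"
        using IH lts l2 by (auto simp: colored_Node)
      ultimately show ?thesis unfolding e using ND kR by auto
    qed
  qed
qed

lemma bfs_simple: "simple t \<Longrightarrow> p \<in> ND t \<Longrightarrow> q \<in> ND t \<Longrightarrow> bfs_less p q \<longleftrightarrow> length q < length p"
proof -
  assume S: "simple t" and p: "p \<in> ND t" and q: "q \<in> ND t"
  have "\<not> left_of p q"
  proof
    assume "left_of p q"
    then have "length p = length q" by (rule left_of_len)
    then have "p = q" using S p q unfolding simple_def ND_def by blast
    then show False using \<open>left_of p q\<close> left_of_irrefl by simp
  qed
  then show ?thesis by (simp add: bfs_less_def)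
qed

lemma surj_RT:
  assumes T: "T \<in> RT N u j"
  shows "\<exists>T'\<in>OST N u j. contract T' = T"
proof -
  have RD: "reduced T" and Col: "colored N T" and cj: "col T = j" and lw: "leafword T = u"
    using T by (auto simp: RT_def)
  define T' where "T' = bld (rk T) (nv T) 0 [] T"
  have G1: "\<forall>v. v \<in> IN T \<longrightarrow> rk T v < nv T" using rk_less[of _ T] by (simp add: nv_IN)
  have G2: "\<forall>v i. v @ [i] \<in> IN T \<longrightarrow> rk T v < rk T (v @ [i])"
  proof (intro allI impI)
    fix v i assume a: "v @ [i] \<in> IN T"
    then have "valid T (butlast (v@[i])) \<and> \<not> is_leaf T (butlast (v@[i]))"
      using butlast_valid[of T "v@[i]"] by (auto simp: IN_def verts_def)
    then have "v \<in> IN T" by (simp add: IN_def verts_def)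
    moreover have "r_less (v@[i]) v" unfolding r_less_def by (intro disjI1 exI[of _ "[i]"]) simp
    ultimately show "rk T v < rk T (v @ [i])" using rk_mono a by blast
  qed
  have B: "lay (nv T - 0) T' \<and> 0 \<le> nv T \<and> (\<forall>p \<in> ND T'. 0 + length p = rk T ([] @ cmap T' p))
    \<and> contract T' = T \<and> (colored N T \<longrightarrow> colored N T') \<and> col T' = col T"
    unfolding T'_def by (rule bld_props[OF RD G1 G2]) auto
  have lay: "layered T'" "height T' = nv T" using B lay_layered by auto
  have ct: "contract T' = T" using B by simp
  have lev: "\<forall>p\<in>ND T'. length p = rk T (cmap T' p)" using B by simp
  have cimg: "cmap T' ` ND T' = IN T" using cmap_image[of T'] ct by simp
  have cinj: "inj_on (cmap T') (ND T')" by (rule cmap_inj)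
  have S: "simple T'"
    unfolding simple_def
  proof (intro ballI impI)
    fix p q assume a: "p \<in> verts T'" "q \<in> verts T'" "nondeg T' p \<and> nondeg T' q \<and> length p = length q"
    then have pq: "p \<in> ND T'" "q \<in> ND T'" by (auto simp: ND_def)
    then have "rk T (cmap T' p) = length p" "rk T (cmap T' q) = length q" using lev by auto
    then have "rk T (cmap T' p) = rk T (cmap T' q)" using a by simp
    moreover have "cmap T' p \<in> IN T" "cmap T' q \<in> IN T" using cimg pq by auto
    ultimately have "cmap T' p = cmap T' q" using rk_inj by (metis inj_onD)
    then show "p = q" using cinj pq by (metis inj_onD)
  qed
  have P: "proper T'"
    unfolding proper_def
  proof (intro allI impI)
    fix k assume "k < nlayers T'"
    then have "k \<in> {..<card (IN T)}" using lay(2) nv_IN[of T] by (simp add: nlayers_def)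
    then have "k \<in> rk T ` IN T" using rk_image[of T] by simp
    then obtain w where w: "w \<in> IN T" "rk T w = k" by (auto simp del: rk_image)
    have "w \<in> cmap T' ` ND T'" using cimg w(1) by simp
    then obtain p where p: "p \<in> ND T'" "cmap T' p = w" by blast
    have "length p = rk T (cmap T' p)" using lev p(1) by blast
    then have "length p = k" using p(2) w(2) by simp
    then show "\<exists>p\<in>verts T'. length p = k \<and> nondeg T' p" using p(1) unfolding ND_def by blast
  qed
  have C: "Coin T'"
    unfolding Coin_def
  proof (intro ballI impI)
    fix p q assume a: "p \<in> verts T'" "q \<in> verts T'" "nondeg T' p \<and> nondeg T' q"
    then have pq: "p \<in> ND T'" "q \<in> ND T'" by (auto simp: ND_def)
    have i: "cmap T' p \<in> IN T" "cmap T' q \<in> IN T" using cimg pq by auto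
    have "bfs_less p q \<longleftrightarrow> length q < length p" using bfs_simple S pq by blast
    also have "\<dots> \<longleftrightarrow> rk T (cmap T' q) < rk T (cmap T' p)" using lev pq by simp
    also have "\<dots> \<longleftrightarrow> r_less (cmap T' p) (cmap T' q)" using rk_iff[OF i(1) i(2)] by simp
    also have "\<dots> \<longleftrightarrow> r_less p q" using cmap_C34 pq by (auto simp: ND_def verts_def)
    finally show "bfs_less p q \<longleftrightarrow> r_less p q" .
  qed
  have R: "order_reduced T'" using A2 lay P C by blast
  have "colored N T'" "col T' = j" using B Col cj by auto
  moreover have "leafword T' = u" using leafword_contract[of T'] ct lw by simp
  ultimately have "T' \<in> OST N u j"
    unfolding OST_def using lay S P R by simp
  then show ?thesis using ct by blast
qed

theorem theorem10:
  fixes N :: nat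
  assumes "N \<ge> 1"
  shows "(\<forall>T. colored N T \<and> layered T \<and> proper T \<longrightarrow>
            ((\<forall>x\<in>verts T. \<forall>y\<in>verts T. nondeg T x \<and> nondeg T y \<longrightarrow>
                 (bfs_less x y \<longleftrightarrow> r_less x y))
             \<longleftrightarrow> simple T \<and> order_reduced T))
       \<and> (\<forall>j u. j \<in> {1..N} \<and> set u \<subseteq> {1..N} \<longrightarrow>
            bij_betw contract (OST N u j) (RT N u j))
       \<and> (\<forall>j u T T'. j \<in> {1..N} \<and> set u \<subseteq> {1..N} \<and> T \<in> RT N u j \<and>
            T' \<in> OST N u j \<and> contract T' = T \<longrightarrow>
            Omega T' = Lambda_r T \<and> nlayers T' = nv T)"
proof (intro conjI allI impI)
  fix T assume "colored N T \<and> layered T \<and> proper T"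
  then show "(\<forall>x\<in>verts T. \<forall>y\<in>verts T. nondeg T x \<and> nondeg T y \<longrightarrow> (bfs_less x y \<longleftrightarrow> r_less x y))
             \<longleftrightarrow> simple T \<and> order_reduced T"
    using partA[of T] by (simp add: Coin_def)
next
  fix j u
  show "bij_betw contract (OST N u j) (RT N u j)"
    unfolding bij_betw_def
  proof
    show "inj_on contract (OST N u j)" by (rule inj_OST)
    show "contract ` OST N u j = RT N u j"
    proof
      show "contract ` OST N u j \<subseteq> RT N u j" using contract_RT by blast
      show "RT N u j \<subseteq> contract ` OST N u j"
      proof
        fix T assume "T \<in> RT N u j"
        then obtain T' where "T' \<in> OST N u j" "contract T' = T" using surj_RT by blast
        then show "T \<in> contract ` OST N u j" by (metis imageI)
      qed
    qed
  qed
next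
  fix j u T T'
  assume "j \<in> {1..N} \<and> set u \<subseteq> {1..N} \<and> T \<in> RT N u j \<and> T' \<in> OST N u j \<and> contract T' = T"
  then show "Omega T' = Lambda_r T" "nlayers T' = nv T" using partC[of T' N u j] by auto
qed

end
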